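(* Let $f:\mathbb{N}\to\mathbb{R}$ with $f(1)=1$. Assume there exist an integer $N\geq2$, $C>0$ and $\gamma\in\mathbb{R}$ such that $f(n)=0$ for all $2\leq n\leq N$ and $|f(n)|\leq Cn^\gamma$ for all $n>N$. Then $$|f^{-1}(n)|\leq n^{\gamma+\varsigma}, \quad n>N,$$ where $\varsigma>1$ is the unique root of $\zeta(s)=\frac{1}{C}+\sum_{m=1}^{N} m^{-s}$.
   Context: $f^{-1}$ denotes the Dirichlet inverse of $f$: the arithmetic function with $\sum_{d\mid n} f(n/d) f^{-1}(d)=\varepsilon(n)$ for all $n$, where $\varepsilon(1)=1$ and $\varepsilon(n)=0$ for $n\ge2$. $\zeta$ is the Riemann zeta function. *)

theory Defs
  imports "HOL-Analysis.Analysis"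
begin

text \<open>Arithmetic functions are modelled as functions nat => real; only the values
  at n >= 1 are meaningful (the value at 0 is ignored).\<close>

definition dirichlet_inverse :: "(nat \<Rightarrow> real) \<Rightarrow> (nat \<Rightarrow> real) \<Rightarrow> bool" where
  "dirichlet_inverse f g \<longleftrightarrow>
     (\<forall>n\<ge>1. (\<Sum>d | d dvd n. f (n div d) * g d) = (if n = 1 then 1 else 0))"

definition zeta_real :: "real \<Rightarrow> real" where
  "zeta_real s = (\<Sum>n. 1 / (real (Suc n) powr s))"

end

theory Submission
  imports Defs
begin


definition Tz :: "nat \<Rightarrow> real \<Rightarrow> real" where
  "Tz N s = (\<Sum>n. real (Suc (n + N)) powr (-s))"

lemma Tz_summable: "s > 1 \<Longrightarrow> summable (\<lambda>n. real (Suc (n + N)) powr (-s))"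
proof -
  assume "s > 1"
  hence "summable (\<lambda>n. real n powr (-s))" by (subst summable_real_powr_iff) simp
  hence "summable (\<lambda>n. real (n + Suc N) powr (-s))" by (subst summable_iff_shift)
  thus ?thesis by simp
qed

lemma zeta_split: "s > 1 \<Longrightarrow> zeta_real s = (\<Sum>m=1..N. real m powr (- s)) + Tz N s"
proof -
  assume s: "s > 1"
  have z: "zeta_real s = (\<Sum>n. real (Suc n) powr (-s))"
    unfolding zeta_real_def by (simp add: powr_minus_divide)
  have "summable (\<lambda>n. real (Suc n) powr (-s))" using Tz_summable[OF s, of 0] by simp
  from suminf_split_initial_segment[OF this, of N]
  show ?thesis unfolding z Tz_def using sum_bounds_lt_plus1[of "\<lambda>m. real m powr (-s)" N] by simp
qed

lemma Tz_strict: "N \<ge> 1 \<Longrightarrow> 1 < s \<Longrightarrow> s < t \<Longrightarrow> Tz N t < Tz N s"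
proof -
  assume N: "N \<ge> 1" and st: "1 < s" "s < t"
  have "0 < (\<Sum>n. real (Suc (n + N)) powr (-s) - real (Suc (n + N)) powr (-t))"
  proof (rule suminf_pos)
    show "summable (\<lambda>n. real (Suc (n + N)) powr (-s) - real (Suc (n + N)) powr (-t))"
      using Tz_summable[of s N] Tz_summable[of t N] st by (intro summable_diff) auto
    fix n
    have "real (Suc (n + N)) > 1" using N by simp
    then show "0 < real (Suc (n + N)) powr (-s) - real (Suc (n + N)) powr (-t)"
      using st by (simp add: powr_less_mono)
  qed
  also have "\<dots> = Tz N s - Tz N t" unfolding Tz_def
    using Tz_summable[of s N] Tz_summable[of t N] st by (subst suminf_diff) auto
  finally show ?thesis by simp
qed

lemma Tz_cont: "1 < a \<Longrightarrow> continuous_on {a..b} (Tz N)"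
proof -
  assume a: "1 < a"
  have "uniform_limit {a..b} (\<lambda>k x. \<Sum>i<k. real (Suc (i + N)) powr (-x)) (\<lambda>x. suminf (\<lambda>i. real (Suc (i + N)) powr (-x))) sequentially"
  proof (rule Weierstrass_m_test)
    fix n x assume "x \<in> {a..b}"
    then show "norm (real (Suc (n + N)) powr (-x)) \<le> real (Suc (n + N)) powr (-a)"
      by (simp add: powr_mono)
  next
    show "summable (\<lambda>n. real (Suc (n + N)) powr (-a))" using Tz_summable a .
  qed
  then have "continuous_on {a..b} (\<lambda>x. suminf (\<lambda>i. real (Suc (i + N)) powr (-x)))"
    by (rule uniform_limit_theorem[rotated]) (auto intro!: always_eventually continuous_intros)
  thus ?thesis unfolding Tz_def[abs_def] .
qed

lemma Tz_small: "N \<ge> 1 \<Longrightarrow> c > 0 \<Longrightarrow> \<exists>b>1. Tz N b \<le> c"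
proof -
  assume N: "N \<ge> 1" and c: "c > 0"
  define Z where "Z = (\<Sum>n. real (Suc n) powr (-2))"
  have Zs: "summable (\<lambda>n. real (Suc n) powr (-2))" using Tz_summable[of 2 0] by simp
  have Z0: "Z \<ge> 0" unfolding Z_def by (rule suminf_nonneg[OF Zs]) simp
  define q where "q = log (real (Suc N)) (Z / c + 1)"
  define b where "b = 2 + max 0 q"
  have b2: "b \<ge> 2" unfolding b_def by simp
  have base: "real (Suc N) > 1" using N by simp
  have key: "real (Suc N) powr (b - 2) \<ge> Z / c + 1"
  proof -
    have "Z / c + 1 = real (Suc N) powr q" unfolding q_def using base Z0 c
      by (subst powr_log_cancel) (auto intro: add_nonneg_pos)
    also have "\<dots> \<le> real (Suc N) powr (b - 2)" unfolding b_def using base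
      by (intro powr_mono) auto
    finally show ?thesis .
  qed
  have trm: "real (Suc (n + N)) powr (-b) \<le> real (Suc N) powr (2 - b) * real (Suc n) powr (-2)" for n
  proof -
    have "real (Suc (n + N)) powr (-b) = real (Suc (n + N)) powr (2 - b) * real (Suc (n + N)) powr (-2)"
      by (simp add: powr_add[symmetric])
    also have "\<dots> \<le> real (Suc N) powr (2 - b) * real (Suc n) powr (-2)"
      using b2 by (intro mult_mono powr_mono2' powr_mono2) auto
    finally show ?thesis .
  qed
  have "Tz N b \<le> (\<Sum>n. real (Suc N) powr (2 - b) * real (Suc n) powr (-2))"
    unfolding Tz_def using trm Tz_summable[of b N] b2 Zs
    by (intro suminf_le summable_mult) auto
  also have "\<dots> = real (Suc N) powr (2 - b) * Z" unfolding Z_def using Zs by (rule suminf_mult)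
  also have "\<dots> = Z / real (Suc N) powr (b - 2)"
  proof -
    have "real (Suc N) powr (2 - b) = 1 / real (Suc N) powr (b - 2)"
      using powr_minus_divide[of "real (Suc N)" "b - 2"] by simp
    thus ?thesis by simp
  qed
  also have "\<dots> \<le> Z / (Z / c + 1)"
  proof -
    have p: "Z / c + 1 > 0" using Z0 c by (simp add: add_nonneg_pos)
    show ?thesis using key p Z0 by (intro divide_left_mono) (auto intro!: mult_pos_pos)
  qed
  also have "\<dots> \<le> c" using Z0 c by (simp add: field_simps)
  finally show ?thesis using b2 by (intro exI[of _ b]) auto
qed

lemma Tz_large: "N \<ge> 1 \<Longrightarrow> c > 0 \<Longrightarrow> \<exists>a>1. Tz N a \<ge> c"
proof -
  assume N: "N \<ge> 1" and c: "c > 0"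
  have "\<not> summable (\<lambda>n. inverse (real (n + Suc N)))"
    using not_summable_harmonic[where 'a=real] by (subst summable_iff_shift)
  have "\<exists>K. (\<Sum>k\<le>K. inverse (real (k + Suc N))) > 2 * c"
  proof (rule ccontr)
    assume "\<not> ?thesis"
    hence "\<And>n. (\<Sum>k\<le>n. inverse (real (k + Suc N))) \<le> 2 * c" by (simp add: not_less)
    hence "summable (\<lambda>n. inverse (real (n + Suc N)))" by (intro bounded_imp_summable) auto
    with \<open>\<not> summable _\<close> show False by contradiction
  qed
  then obtain K where K: "(\<Sum>k\<le>K. inverse (real (k + Suc N))) > 2 * c" by blast
  define L where "L = real (K + Suc N)"
  have L2: "L > 1" unfolding L_def using N by simp
  define a where "a = 1 + ln 2 / ln L"
  have a1: "a > 1" unfolding a_def using L2 by simp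
  have La: "L powr (1 - a) = 1 / 2"
  proof -
    have "L powr (1 - a) = exp (- ln 2)" unfolding a_def powr_def using L2 by simp
    also have "\<dots> = 1/2" by (simp add: exp_minus)
    finally show ?thesis .
  qed
  have "c < (\<Sum>k\<le>K. inverse (real (k + Suc N)) * L powr (1 - a))"
    using K by (simp add: La sum_divide_distrib[symmetric])
  also have "\<dots> \<le> (\<Sum>k\<le>K. real (Suc (k + N)) powr (-a))"
  proof (rule sum_mono)
    fix k assume "k \<in> {..K}"
    hence kL: "real (Suc (k + N)) \<le> L" unfolding L_def by simp
    have "real (Suc (k + N)) powr (-a) = real (Suc (k + N)) powr (-1 + (1 - a))" by simp
    also have "\<dots> = real (Suc (k + N)) powr (-1) * real (Suc (k + N)) powr (1 - a)" by (rule powr_add)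
    also have "\<dots> = inverse (real (k + Suc N)) * real (Suc (k + N)) powr (1 - a)"
      by (simp add: powr_minus)
    finally have "real (Suc (k + N)) powr (-a) = inverse (real (k + Suc N)) * real (Suc (k + N)) powr (1 - a)" .
    also have "\<dots> \<ge> inverse (real (k + Suc N)) * L powr (1 - a)"
      using kL a1 by (intro mult_left_mono powr_mono2') auto
    finally show "inverse (real (k + Suc N)) * L powr (1 - a) \<le> real (Suc (k + N)) powr (-a)" .
  qed
  also have "\<dots> \<le> Tz N a" unfolding Tz_def using Tz_summable[OF a1] by (intro sum_le_suminf) auto
  finally show ?thesis using a1 by (intro exI[of _ a]) auto
qed



lemma g_bound:
  fixes f g :: "nat \<Rightarrow> real" and N :: nat and C \<gamma> \<sigma> :: real
  assumes f1: "f 1 = 1"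
    and g_inv: "dirichlet_inverse f g"
    and N2: "N \<ge> 2"
    and Cpos: "C > 0"
    and fzero: "\<And>n. 2 \<le> n \<Longrightarrow> n \<le> N \<Longrightarrow> f n = 0"
    and fbound: "\<And>n. n > N \<Longrightarrow> \<bar>f n\<bar> \<le> C * real n powr \<gamma>"
    and s1: "\<sigma> > 1" and sT: "Tz N \<sigma> = 1 / C"
  shows "n \<ge> 1 \<Longrightarrow> \<bar>g n\<bar> \<le> real n powr (\<gamma> + \<sigma>)"
proof (induction n rule: less_induct)
  case (less n)
  have inv: "(\<Sum>d | d dvd n. f (n div d) * g d) = (if n = 1 then 1 else 0)"
    using g_inv less.prems unfolding dirichlet_inverse_def by blast
  show ?case
  proof (cases "n = 1")
    case True
    then have "{d. d dvd n} = {1}" by auto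
    with inv True f1 show ?thesis by simp
  next
    case False
    with less.prems have n2: "n \<ge> 2" by simp
    define D' where "D' = {d. d dvd n \<and> d \<noteq> n}"
    have fin: "finite {d. d dvd n}" using n2 by (intro finite_divisors_nat) simp
    have finD': "finite D'" unfolding D'_def by (rule finite_subset[OF _ fin]) auto
    have "{d. d dvd n} = insert n D'" unfolding D'_def by auto
    with inv False f1 finD' have "g n + (\<Sum>d\<in>D'. f (n div d) * g d) = 0"
      using n2 by (simp add: D'_def)
    hence gn: "g n = - (\<Sum>d\<in>D'. f (n div d) * g d)" by linarith
    define E where "E = {d. d dvd n \<and> N < n div d}"
    have ED': "E \<subseteq> D'" unfolding E_def D'_def using N2 n2 by auto
    have "\<bar>g n\<bar> \<le> (\<Sum>d\<in>D'. \<bar>f (n div d)\<bar> * \<bar>g d\<bar>)"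
      unfolding gn abs_minus_cancel by (rule order.trans[OF sum_abs]) (simp add: abs_mult)
    also have "\<dots> = (\<Sum>d\<in>E. \<bar>f (n div d)\<bar> * \<bar>g d\<bar>)"
    proof (rule sum.mono_neutral_right[OF finD' ED'])
      show "\<forall>d\<in>D' - E. \<bar>f (n div d)\<bar> * \<bar>g d\<bar> = 0"
      proof
        fix d assume d: "d \<in> D' - E"
        then have dn: "d dvd n" "d \<noteq> n" "n div d \<le> N" unfolding D'_def E_def by auto
        then obtain k where k: "n = d * k" by blast
        have "k \<noteq> 0" using k n2 by (cases "k = 0") auto
        moreover have "k \<noteq> 1" using k dn by auto
        ultimately have "2 \<le> n div d" using n2 k dn by auto
        with dn fzero show "\<bar>f (n div d)\<bar> * \<bar>g d\<bar> = 0" by simp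
      qed
    qed
    also have "\<dots> \<le> (\<Sum>d\<in>E. C * real n powr (\<gamma> + \<sigma>) * real (n div d) powr (-\<sigma>))"
    proof (rule sum_mono)
      fix d assume d: "d \<in> E"
      then have dn: "d dvd n" "N < n div d" unfolding E_def by auto
      then obtain k where k: "n = d * k" by blast
      with dn n2 have k0: "k > N" "d \<ge> 1" by (auto split: if_splits)
      hence kd: "n div d = k" using k by simp
      have "d * 1 < d * k" using k0 N2 by (intro mult_strict_left_mono) auto
      hence "d < n" using k by simp
      hence IH: "\<bar>g d\<bar> \<le> real d powr (\<gamma> + \<sigma>)" using less.IH k0 by blast
      have "\<bar>f (n div d)\<bar> * \<bar>g d\<bar> \<le> (C * real k powr \<gamma>) * real d powr (\<gamma> + \<sigma>)"
        using fbound[of k] k0 IH kd by (intro mult_mono) auto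
      also have "\<dots> = C * real n powr (\<gamma> + \<sigma>) * real (n div d) powr (-\<sigma>)"
      proof -
        have "real n powr (\<gamma> + \<sigma>) * real k powr (-\<sigma>)
              = real d powr (\<gamma> + \<sigma>) * (real k powr (\<gamma> + \<sigma>) * real k powr (-\<sigma>))"
          unfolding k by (simp add: powr_mult)
        also have "real k powr (\<gamma> + \<sigma>) * real k powr (-\<sigma>) = real k powr \<gamma>"
          by (simp add: powr_add[symmetric])
        finally show ?thesis unfolding kd by simp
      qed
      finally show "\<bar>f (n div d)\<bar> * \<bar>g d\<bar> \<le> C * real n powr (\<gamma> + \<sigma>) * real (n div d) powr (-\<sigma>)" .
    qed
    also have "\<dots> = C * real n powr (\<gamma> + \<sigma>) * (\<Sum>d\<in>E. real (n div d) powr (-\<sigma>))"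
      by (simp add: sum_distrib_left)
    also have "(\<Sum>d\<in>E. real (n div d) powr (-\<sigma>)) = (\<Sum>k\<in>{k. k dvd n \<and> N < k}. real k powr (-\<sigma>))"
    proof (rule sum.reindex_bij_witness[of _ "\<lambda>k. n div k" "\<lambda>d. n div d"])
      fix a assume "a \<in> {k. k dvd n \<and> N < k}"
      thus "n div (n div a) = a" "n div a \<in> E" using n2 unfolding E_def
        by (auto simp: div_div_eq_right dvd_div_eq_mult elim!: dvdE)
    next
      fix a assume "a \<in> E"
      thus "n div (n div a) = a" "n div a \<in> {k. k dvd n \<and> N < k}" using n2 unfolding E_def
        by (auto elim!: dvdE)
    qed simp
    also have "\<dots> \<le> (\<Sum>m<n. real (Suc (m + N)) powr (-\<sigma>))"
    proof -
      have "{k. k dvd n \<and> N < k} \<subseteq> (\<lambda>m. Suc (m + N)) ` {..<n}"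
      proof
        fix k assume "k \<in> {k. k dvd n \<and> N < k}"
        hence "k dvd n" "N < k" by auto
        hence "k \<le> n" using n2 by (intro dvd_imp_le) auto
        thus "k \<in> (\<lambda>m. Suc (m + N)) ` {..<n}" using \<open>N < k\<close>
          by (intro image_eqI[of _ _ "k - Suc N"]) auto
      qed
      hence "(\<Sum>k\<in>{k. k dvd n \<and> N < k}. real k powr (-\<sigma>)) \<le> (\<Sum>k\<in>(\<lambda>m. Suc (m + N)) ` {..<n}. real k powr (-\<sigma>))"
        by (intro sum_mono2) auto
      also have "\<dots> = (\<Sum>m<n. real (Suc (m + N)) powr (-\<sigma>))"
        by (subst sum.reindex) (auto simp: inj_on_def)
      finally show ?thesis .
    qed
    also have "\<dots> \<le> Tz N \<sigma>" unfolding Tz_def using Tz_summable[OF s1] by (intro sum_le_suminf) auto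
    finally show ?thesis using sT Cpos by (simp add: mult_left_mono)
  qed
qed


theorem proposition3p15:
  fixes f g :: "nat \<Rightarrow> real" and N :: nat and C \<gamma> :: real
  assumes f1: "f 1 = 1"
    and g_inv: "dirichlet_inverse f g"
    and N2: "N \<ge> 2"
    and Cpos: "C > 0"
    and fzero: "\<And>n. 2 \<le> n \<Longrightarrow> n \<le> N \<Longrightarrow> f n = 0"
    and fbound: "\<And>n. n > N \<Longrightarrow> \<bar>f n\<bar> \<le> C * real n powr \<gamma>"
  shows "(\<exists>!s. s > 1 \<and> zeta_real s = 1 / C + (\<Sum>m=1..N. real m powr (- s)))
       \<and> (\<forall>\<sigma>. \<sigma> > 1 \<and> zeta_real \<sigma> = 1 / C + (\<Sum>m=1..N. real m powr (- \<sigma>))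
            \<longrightarrow> (\<forall>n>N. \<bar>g n\<bar> \<le> real n powr (\<gamma> + \<sigma>)))"
proof -
  have N1: "N \<ge> 1" using N2 by simp
  have eqv: "s > 1 \<and> zeta_real s = 1 / C + (\<Sum>m=1..N. real m powr (- s)) \<longleftrightarrow> s > 1 \<and> Tz N s = 1 / C" for s
    using zeta_split[of s N] by auto
  have c: "1 / C > 0" using Cpos by simp
  obtain a where a: "a > 1" "Tz N a \<ge> 1 / C" using Tz_large[OF N1 c] by blast
  obtain b where b: "b > 1" "Tz N b \<le> 1 / C" using Tz_small[OF N1 c] by blast
  have b': "Tz N (max a b) \<le> 1 / C"
  proof (cases "b < a")
    case True
    then show ?thesis using Tz_strict[OF N1 b(1) True] b by simp
  qed (use b in simp)
  obtain s where s: "a \<le> s" "s \<le> max a b" "Tz N s = 1 / C"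
    using IVT2'[of "Tz N" "max a b" "1 / C" a, OF b' a(2) _ Tz_cont[OF a(1)]] by auto
  have ex: "\<exists>!s. s > 1 \<and> Tz N s = 1 / C"
  proof (rule ex1I[of _ s])
    show "s > 1 \<and> Tz N s = 1 / C" using s a by auto
    fix t assume t: "t > 1 \<and> Tz N t = 1 / C"
    show "t = s"
    proof (rule ccontr)
      assume "t \<noteq> s"
      hence "t < s \<or> s < t" by auto
      thus False using Tz_strict[OF N1, of t s] Tz_strict[OF N1, of s t] s a t by auto
    qed
  qed
  show ?thesis
  proof
    show "\<exists>!s. s > 1 \<and> zeta_real s = 1 / C + (\<Sum>m=1..N. real m powr (- s))"
      unfolding eqv by (rule ex)
    show "\<forall>\<sigma>. \<sigma> > 1 \<and> zeta_real \<sigma> = 1 / C + (\<Sum>m=1..N. real m powr (- \<sigma>))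
            \<longrightarrow> (\<forall>n>N. \<bar>g n\<bar> \<le> real n powr (\<gamma> + \<sigma>))"
    proof (intro allI impI)
      fix \<sigma> n assume h: "\<sigma> > 1 \<and> zeta_real \<sigma> = 1 / C + (\<Sum>m=1..N. real m powr (- \<sigma>))" and n: "N < n"
      from h have "\<sigma> > 1" "Tz N \<sigma> = 1 / C" unfolding eqv by auto
      from g_bound[OF f1 g_inv N2 Cpos fzero fbound this] n N1
      show "\<bar>g n\<bar> \<le> real n powr (\<gamma> + \<sigma>)" by simp
    qed
  qed
qed

end
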